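(* Let $L$ be a sharp C-lattice and $p\in L$ a prime element. Then the localization $L_p$ is sharp.
   Context: A multiplicative lattice is a complete lattice $(L,\le)$ with bottom $0$ and top $1$ which is also a commutative monoid with identity $1$ such that $a(\bigvee_\alpha b_\alpha)=\bigvee_\alpha(ab_\alpha)$ for all $a,b_\alpha\in L$. An element $c$ is compact if $c\le\bigvee S$ implies $c\le\bigvee T$ for some finite $T\subseteq S$. A C-lattice is a multiplicative lattice in which $1$ is compact, the product of two compact elements is compact, and every element is a join of compact elements; let $L^*$ denote its set of compact elements. A proper element $p\neq1$ is prime if $xy\le p$ implies $x\le p$ or $y\le p$. For $p$ prime and $x\in L$, $x_p=\bigvee\{a\in L^*: as\le x \text{ for some } s\in L^* \text{ with } s\not\le p\}$, and $L_p=\{x_p: x\in L\}$ is a lattice with multiplication $(x,y)\mapsto(xy)_p$, join $\{b_\alpha\}\mapsto(\bigvee b_\alpha)_p$ and meet $\{b_\alpha\}\mapsto(\bigwedge b_\alpha)_p$. A lattice $M$ is sharp if whenever $a_1a_2\le b$ in $M$, there exist $b_1,b_2\in M$ with $a_i\le b_i$ ($i=1,2$) and $b=b_1b_2$. *)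

theory Defs
  imports Main
begin

definition mult_lattice :: "('a::complete_lattice \<Rightarrow> 'a \<Rightarrow> 'a) \<Rightarrow> bool" where
  "mult_lattice m \<longleftrightarrow>
     (\<forall>a b c. m (m a b) c = m a (m b c)) \<and>
     (\<forall>a b. m a b = m b a) \<and>
     (\<forall>a. m a top = a) \<and>
     (\<forall>a B. m a (Sup B) = Sup ((m a) ` B))"

definition compact_el :: "'a::complete_lattice \<Rightarrow> bool" where
  "compact_el c \<longleftrightarrow> (\<forall>S. c \<le> Sup S \<longrightarrow> (\<exists>T. T \<subseteq> S \<and> finite T \<and> c \<le> Sup T))"

definition C_lattice :: "('a::complete_lattice \<Rightarrow> 'a \<Rightarrow> 'a) \<Rightarrow> bool" where
  "C_lattice m \<longleftrightarrow> mult_lattice m \<and> compact_el (top::'a) \<and>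
     (\<forall>a b. compact_el a \<and> compact_el b \<longrightarrow> compact_el (m a b)) \<and>
     (\<forall>x::'a. x = Sup {c. compact_el c \<and> c \<le> x})"

definition prime_el :: "('a::complete_lattice \<Rightarrow> 'a \<Rightarrow> 'a) \<Rightarrow> 'a \<Rightarrow> bool" where
  "prime_el m p \<longleftrightarrow> p \<noteq> top \<and> (\<forall>x y. m x y \<le> p \<longrightarrow> x \<le> p \<or> y \<le> p)"

definition loc :: "('a::complete_lattice \<Rightarrow> 'a \<Rightarrow> 'a) \<Rightarrow> 'a \<Rightarrow> 'a \<Rightarrow> 'a" where
  "loc m p x = Sup {a. compact_el a \<and> (\<exists>s. compact_el s \<and> \<not> s \<le> p \<and> m a s \<le> x)}"

definition Lp :: "('a::complete_lattice \<Rightarrow> 'a \<Rightarrow> 'a) \<Rightarrow> 'a \<Rightarrow> 'a set" where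
  "Lp m p = range (loc m p)"

definition sharp_on :: "'a::order set \<Rightarrow> ('a \<Rightarrow> 'a \<Rightarrow> 'a) \<Rightarrow> bool" where
  "sharp_on M mm \<longleftrightarrow> (\<forall>a1\<in>M. \<forall>a2\<in>M. \<forall>b\<in>M. mm a1 a2 \<le> b \<longrightarrow>
     (\<exists>b1\<in>M. \<exists>b2\<in>M. a1 \<le> b1 \<and> a2 \<le> b2 \<and> b = mm b1 b2))"

definition sharp :: "('a::complete_lattice \<Rightarrow> 'a \<Rightarrow> 'a) \<Rightarrow> bool" where
  "sharp m \<longleftrightarrow> sharp_on UNIV m"

end

theory Submission
  imports Defs
begin

locale cl =
  fixes m :: "'a::complete_lattice \<Rightarrow> 'a \<Rightarrow> 'a" and p :: 'a
  assumes C: "C_lattice m" and P: "prime_el m p"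
begin

lemma assoc: "m (m a b) c = m a (m b c)" using C unfolding C_lattice_def mult_lattice_def by blast
lemma comm: "m a b = m b a" using C unfolding C_lattice_def mult_lattice_def by blast
lemma unit: "m a top = a" using C unfolding C_lattice_def mult_lattice_def by blast
lemma dist: "m a (Sup B) = Sup ((m a) ` B)" using C unfolding C_lattice_def mult_lattice_def by blast
lemma Cparts: "compact_el (top::'a)" "\<forall>a b. compact_el a \<and> compact_el b \<longrightarrow> compact_el (m a b)"
  "\<forall>x::'a. x = Sup {c. compact_el c \<and> c \<le> x}"
  by (rule C[unfolded C_lattice_def, THEN conjunct2, THEN conjunct1])
    (rule C[unfolded C_lattice_def, THEN conjunct2, THEN conjunct2, THEN conjunct1],
     rule C[unfolded C_lattice_def, THEN conjunct2, THEN conjunct2, THEN conjunct2])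
lemma ctop: "compact_el (top::'a)" by (rule Cparts(1))
lemma cmult: "compact_el a \<Longrightarrow> compact_el b \<Longrightarrow> compact_el (m a b)" using Cparts(2) by simp
lemma decomp: "(x::'a) = Sup {c. compact_el c \<and> c \<le> x}" by (rule Cparts(3)[rule_format])
lemma ptop: "\<not> top \<le> p" using P unfolding prime_el_def using top.extremum_unique by blast
lemma pprime: "\<not> s \<le> p \<Longrightarrow> \<not> u \<le> p \<Longrightarrow> \<not> m s u \<le> p" using P unfolding prime_el_def by blast

lemma mono_r: "b \<le> c \<Longrightarrow> m a b \<le> m a c"
proof -
  assume "b \<le> c"
  hence "c = Sup {b, c}" by (simp add: sup.absorb2)
  hence "m a c = Sup {m a b, m a c}" by (metis dist image_insert image_empty)
  thus ?thesis by (metis Sup_insert Sup_empty sup_bot_right sup_ge1)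
qed

lemma mono: "a \<le> a' \<Longrightarrow> b \<le> b' \<Longrightarrow> m a b \<le> m a' b'"
  by (metis comm mono_r order_trans)

lemma le_left: "m a b \<le> a" by (metis mono_r top_greatest unit)

definition good :: "'a \<Rightarrow> 'a \<Rightarrow> bool" where
  "good x t \<longleftrightarrow> (\<exists>s. compact_el s \<and> \<not> s \<le> p \<and> m t s \<le> x)"

lemma loc_eq: "loc m p x = Sup {a. compact_el a \<and> good x a}"
  unfolding loc_def good_def by simp

lemma fin: "finite T \<Longrightarrow> (\<forall>t\<in>T. good x t) \<Longrightarrow> \<exists>s. compact_el s \<and> \<not> s \<le> p \<and> (\<forall>t\<in>T. m t s \<le> x)"
proof (induction T rule: finite_induct)
  case empty
  then show ?case using ctop ptop by blast
next
  case (insert t T)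
  then obtain s where s: "compact_el s" "\<not> s \<le> p" "\<forall>t\<in>T. m t s \<le> x" by blast
  from insert obtain u where u: "compact_el u" "\<not> u \<le> p" "m t u \<le> x" unfolding good_def by blast
  have "\<forall>t'\<in>insert t T. m t' (m s u) \<le> x"
  proof
    fix t' assume "t' \<in> insert t T"
    then show "m t' (m s u) \<le> x"
    proof
      assume "t' = t"
      have "m t' (m s u) \<le> m t u" using \<open>t' = t\<close> by (metis comm le_left mono_r)
      then show ?thesis using u by simp
    next
      assume "t' \<in> T"
      have "m t' (m s u) \<le> m t' s" by (metis le_left mono_r)
      then show ?thesis using s \<open>t' \<in> T\<close> by (meson order_trans)
    qed
  qed
  moreover have "compact_el (m s u)" using s u cmult by blast
  moreover have "\<not> m s u \<le> p" using s u pprime by blast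
  ultimately show ?case by blast
qed

lemma G: assumes "compact_el a" "a \<le> Sup S" "\<forall>t\<in>S. good x t" shows "good x a"
proof -
  obtain T where T: "T \<subseteq> S" "finite T" "a \<le> Sup T" using assms unfolding compact_el_def by blast
  then obtain s where s: "compact_el s" "\<not> s \<le> p" "\<forall>t\<in>T. m t s \<le> x" using fin assms by blast
  have "m a s \<le> m (Sup T) s" using T mono by simp
  also have "\<dots> = Sup ((\<lambda>t. m s t) ` T)" by (metis comm dist)
  also have "\<dots> \<le> x"
  proof (rule Sup_least)
    fix z assume "z \<in> (\<lambda>t. m s t) ` T"
    then obtain t where "t \<in> T" "z = m s t" by blast
    then show "z \<le> x" using s(3) comm by metis
  qed
  finally have "m a s \<le> x" .
  then show ?thesis using s(1,2) unfolding good_def by (intro exI[of _ s] conjI)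
qed

lemma char: "compact_el a \<Longrightarrow> a \<le> loc m p x \<Longrightarrow> good x a"
proof -
  assume a: "compact_el a" "a \<le> loc m p x"
  have "a \<le> Sup {a. compact_el a \<and> good x a}" using a(2) unfolding loc_eq .
  moreover have "\<forall>t\<in>{a. compact_el a \<and> good x a}. good x t" by blast
  ultimately show "good x a" using a(1) G by blast
qed

lemma le_loc: "x \<le> loc m p x"
proof -
  have "Sup {c. compact_el c \<and> c \<le> x} \<le> loc m p x" unfolding loc_eq
    by (rule Sup_subset_mono) (auto simp: good_def intro!: exI[of _ top] ctop ptop simp: unit)
  then show ?thesis using decomp by metis
qed

lemma loc_mono: "x \<le> y \<Longrightarrow> loc m p x \<le> loc m p y"
  unfolding loc_eq good_def by (rule Sup_subset_mono) (auto intro: order_trans)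

lemma prod: "loc m p (m (loc m p x) (loc m p y)) \<le> loc m p (m x y)"
proof -
  let ?lx = "loc m p x" and ?ly = "loc m p y"
  define S' where "S' = {m c d | c d. compact_el c \<and> c \<le> ?lx \<and> compact_el d \<and> d \<le> ?ly}"
  have goodS: "\<forall>t\<in>S'. good (m x y) t"
  proof
    fix t assume "t \<in> S'"
    then obtain c d where cd: "t = m c d" "compact_el c" "c \<le> ?lx" "compact_el d" "d \<le> ?ly"
      unfolding S'_def by blast
    obtain u where u: "compact_el u" "\<not> u \<le> p" "m c u \<le> x" using char cd unfolding good_def by blast
    obtain v where v: "compact_el v" "\<not> v \<le> p" "m d v \<le> y" using char cd unfolding good_def by blast
    have "m t (m u v) = m (m c u) (m d v)" using cd(1) by (metis assoc comm)
    also have "\<dots> \<le> m x y" using u v mono by simp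
    finally show "good (m x y) t" using u v cmult pprime unfolding good_def by blast
  qed
  have bound: "m ?lx ?ly \<le> Sup S'"
  proof -
    have "m ?lx ?ly = m ?lx (Sup {d. compact_el d \<and> d \<le> ?ly})" using decomp by metis
    also have "\<dots> = Sup (m ?lx ` {d. compact_el d \<and> d \<le> ?ly})" by (rule dist)
    also have "\<dots> \<le> Sup S'"
    proof (rule Sup_least)
      fix z assume "z \<in> m ?lx ` {d. compact_el d \<and> d \<le> ?ly}"
      then obtain d where d: "z = m ?lx d" "compact_el d" "d \<le> ?ly" by blast
      have "z = m d (Sup {c. compact_el c \<and> c \<le> ?lx})" using d decomp comm by metis
      also have "\<dots> = Sup (m d ` {c. compact_el c \<and> c \<le> ?lx})" by (rule dist)
      also have "\<dots> \<le> Sup S'"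
        by (rule Sup_subset_mono) (auto simp: S'_def comm intro: d)
      finally show "z \<le> Sup S'" .
    qed
    finally show ?thesis .
  qed
  show ?thesis unfolding loc_eq[of "m ?lx ?ly"]
  proof (rule Sup_least)
    fix a assume "a \<in> {a. compact_el a \<and> good (m ?lx ?ly) a}"
    then obtain s where s: "compact_el a" "compact_el s" "\<not> s \<le> p" "m a s \<le> m ?lx ?ly"
      unfolding good_def by blast
    have "good (m x y) (m a s)" using G[of "m a s" S' "m x y"] s bound goodS cmult order_trans by blast
    then obtain u where u: "compact_el u" "\<not> u \<le> p" "m (m a s) u \<le> m x y" unfolding good_def by blast
    have "good (m x y) a" unfolding good_def
      using u s cmult pprime assoc by metis
    then show "a \<le> loc m p (m x y)" unfolding loc_eq using s by (auto intro: Sup_upper)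
  qed
qed

lemma loc_top: "loc m p top = top" using le_loc top.extremum_unique by metis

lemma idem: "loc m p (loc m p x) = loc m p x"
proof (rule antisym)
  have "loc m p (m (loc m p x) (loc m p top)) \<le> loc m p (m x top)" by (rule prod)
  then show "loc m p (loc m p x) \<le> loc m p x" unfolding loc_top unit .
qed (rule le_loc)

lemma prod_eq: "loc m p (m (loc m p x) (loc m p y)) = loc m p (m x y)"
  by (rule antisym[OF prod]) (rule loc_mono, rule mono; rule le_loc)

end

theorem lemma2p6:
  fixes m :: "'a::complete_lattice \<Rightarrow> 'a \<Rightarrow> 'a" and p :: 'a
  assumes "C_lattice m" and "sharp m" and "prime_el m p"
  shows "sharp_on (Lp m p) (\<lambda>x y. loc m p (m x y))"
proof -
  interpret cl m p using assms by (simp add: cl_def)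
  show ?thesis unfolding sharp_on_def
  proof (intro ballI impI)
    fix a1 a2 b assume h: "a1 \<in> Lp m p" "a2 \<in> Lp m p" "b \<in> Lp m p" "loc m p (m a1 a2) \<le> b"
    have "m a1 a2 \<le> b" using h(4) le_loc order_trans by blast
    then obtain c1 c2 where c: "a1 \<le> c1" "a2 \<le> c2" "b = m c1 c2"
      using assms(2) unfolding sharp_def sharp_on_def by blast
    obtain y where y: "b = loc m p y" using h(3) unfolding Lp_def by blast
    have "loc m p b = b" using y idem by simp
    have "b = loc m p (m (loc m p c1) (loc m p c2))" using prod_eq c(3) \<open>loc m p b = b\<close> by simp
    moreover have "a1 \<le> loc m p c1" "a2 \<le> loc m p c2" using c le_loc order_trans by blast+
    moreover have "loc m p c1 \<in> Lp m p" "loc m p c2 \<in> Lp m p" unfolding Lp_def by auto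
    ultimately show "\<exists>b1\<in>Lp m p. \<exists>b2\<in>Lp m p. a1 \<le> b1 \<and> a2 \<le> b2 \<and> b = loc m p (m b1 b2)" by blast
  qed
qed

end
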